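(* Let $\Gamma$ be a single-player extensive-form game. For each leaf $z\in\mathcal Z$, $$\frac{1}{\alpha(z)}\le\prod_{I\in\mathcal I_1:\,n_z(I)>1}\min(n_z(I),|A_I|)^{n_z(I)}.$$
   Context: A single-player extensive-form game consists of a finite rooted tree (leaves $\mathcal Z$), nonterminal nodes belonging to Player 1 or chance, and a partition $\mathcal I_1$ of Player 1's nodes into infosets with common action sets $A_I$. For $z\in\mathcal Z$ with root-to-$z$ path $(h_0,\dots,h_{d-1})$, let $I_k$ be the infoset of $h_k$ (for Player 1's nodes) and $a_k$ the action taken at $h_k$. For $I\in\mathcal I_1$ and $a\in A_I$: $n_z(I)=|\{k:I_k=I\}|$, $n_z(a)=|\{k:I_k=I,a_k=a\}|$, $p_z(a)=n_z(a)/n_z(I)$, and the absentmindedness coefficient is $\alpha(z)=\prod_{I\in\mathcal I_1:n_z(I)>1}\prod_{a\in A_I:n_z(a)>0}p_z(a)^{n_z(a)}$. *)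

theory Defs
  imports Complex_Main
begin

(* A game tree is a finite prefix-closed set T of action sequences (histories);
   the root is [] and the children of h are the histories h @ [a].
   P1 is the set of Player 1's nodes (all other nonterminal nodes are chance nodes),
   info h is the infoset of a Player-1 node h, A I is the action set of infoset I. *)

definition children :: "'a list set \<Rightarrow> 'a list \<Rightarrow> 'a set" where
  "children T h = {a. h @ [a] \<in> T}"

definition is_leaf :: "'a list set \<Rightarrow> 'a list \<Rightarrow> bool" where
  "is_leaf T z \<longleftrightarrow> z \<in> T \<and> children T z = {}"

definition sp_game :: "'a list set \<Rightarrow> 'a list set \<Rightarrow> ('a list \<Rightarrow> 'i) \<Rightarrow> ('i \<Rightarrow> 'a set) \<Rightarrow> bool" where
  "sp_game T P1 info A \<longleftrightarrow>
     finite T \<and> [] \<in> T \<and> (\<forall>h a. h @ [a] \<in> T \<longrightarrow> h \<in> T) \<and>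
     P1 \<subseteq> T \<and> (\<forall>h\<in>P1. \<not> is_leaf T h \<and> children T h = A (info h))"

(* n_z(I): number of Player-1 nodes on the root-to-z path lying in infoset I
   (the k-th node on the path is take k z, the action taken there is z ! k) *)
definition n_info :: "'a list set \<Rightarrow> ('a list \<Rightarrow> 'i) \<Rightarrow> 'a list \<Rightarrow> 'i \<Rightarrow> nat" where
  "n_info P1 info z I = card {k. k < length z \<and> take k z \<in> P1 \<and> info (take k z) = I}"

definition n_act :: "'a list set \<Rightarrow> ('a list \<Rightarrow> 'i) \<Rightarrow> 'a list \<Rightarrow> 'i \<Rightarrow> 'a \<Rightarrow> nat" where
  "n_act P1 info z I a = card {k. k < length z \<and> take k z \<in> P1 \<and> info (take k z) = I \<and> z ! k = a}"

definition alpha :: "'a list set \<Rightarrow> ('a list \<Rightarrow> 'i) \<Rightarrow> ('i \<Rightarrow> 'a set) \<Rightarrow> 'a list \<Rightarrow> real" where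
  "alpha P1 info A z =
     (\<Prod>I\<in>{I \<in> info ` P1. n_info P1 info z I > 1}.
        \<Prod>a\<in>{a \<in> A I. n_act P1 info z I a > 0}.
          (real (n_act P1 info z I a) / real (n_info P1 info z I)) ^ n_act P1 info z I a)"

end

theory Submission
  imports Defs
begin

lemma key_ineq:
  fixes S :: "'b set" and c :: "'b \<Rightarrow> nat" and n M :: nat
  assumes fin: "finite S" and pos: "\<forall>a\<in>S. c a > 0" and sm: "(\<Sum>a\<in>S. c a) = n"
    and cM: "card S \<le> M"
  shows "1 / (\<Prod>a\<in>S. (real (c a) / real n) ^ c a) \<le> real M ^ n"
proof (cases "S = {}")
  case True
  then show ?thesis using sm by simp
next
  case False
  define m where "m = card S"
  have m1: "m \<ge> 1" using False fin m_def by (simp add: Suc_le_eq card_gt_0_iff)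
  have npos: "n > 0" using False fin pos sm
    by (metis all_not_in_conv sum_pos)
  define P where "P = (\<Prod>a\<in>S. (real (c a) / real n) ^ c a)"
  have fpos: "\<And>a. a \<in> S \<Longrightarrow> (real (c a) / real n) ^ c a > 0" using pos npos by simp
  have Ppos: "P > 0" unfolding P_def using fpos by (simp add: prod_pos)
  have lnP: "ln P = (\<Sum>a\<in>S. real (c a) * ln (real (c a) / real n))"
    unfolding P_def using fpos pos npos fin
    by (subst ln_prod) (auto simp: ln_realpow intro!: sum.cong)
  have each: "real (c a) * (ln (real n) - ln (real m) - ln (real (c a))) \<le> real n / real m - real (c a)"
    if a: "a \<in> S" for a
  proof -
    have ca: "real (c a) > 0" using pos a by simp
    have x: "real n / (real m * real (c a)) > 0" using ca npos m1 by simp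
    have "ln (real n / (real m * real (c a))) \<le> real n / (real m * real (c a)) - 1"
      using ln_le_minus_one x by blast
    moreover have "ln (real n / (real m * real (c a))) = ln (real n) - ln (real m) - ln (real (c a))"
      using ca npos m1 by (simp add: ln_div ln_mult)
    ultimately have "ln (real n) - ln (real m) - ln (real (c a)) \<le> real n / (real m * real (c a)) - 1"
      by simp
    from mult_left_mono[OF this, of "real (c a)"] ca
    show ?thesis by (simp add: field_simps)
  qed
  have "(\<Sum>a\<in>S. real (c a) * (ln (real n) - ln (real m) - ln (real (c a)))) \<le> (\<Sum>a\<in>S. real n / real m - real (c a))"
    using each by (rule sum_mono)
  also have "\<dots> = 0" using sm m_def m1 by (simp add: sum_subtractf flip: of_nat_sum)
  finally have A: "(\<Sum>a\<in>S. real (c a) * (ln (real n) - ln (real m) - ln (real (c a)))) \<le> 0" .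
  have "(\<Sum>a\<in>S. real (c a) * (ln (real n) - ln (real m) - ln (real (c a))))
        = - (\<Sum>a\<in>S. real (c a) * ln (real (c a) / real n)) - real n * ln (real m)"
  proof -
    have "(\<Sum>a\<in>S. real (c a) * (ln (real n) - ln (real m) - ln (real (c a))))
        = (\<Sum>a\<in>S. - (real (c a) * ln (real (c a) / real n)) - real (c a) * ln (real m))"
      using pos npos by (intro sum.cong) (auto simp: ln_div algebra_simps)
    also have "\<dots> = - (\<Sum>a\<in>S. real (c a) * ln (real (c a) / real n)) - real n * ln (real m)"
      using sm by (simp add: sum_subtractf sum_negf flip: sum_distrib_right of_nat_sum)
    finally show ?thesis .
  qed
  with A lnP have B: "ln P \<ge> - (real n * ln (real m))" by linarith
  have "1 / P = exp (- ln P)" using Ppos by (simp add: exp_minus divide_inverse)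
  also have "\<dots> \<le> exp (real n * ln (real m))" using B by simp
  also have "\<dots> = real m ^ n" using m1 by (simp add: exp_of_nat_mult)
  also have "\<dots> \<le> real M ^ n" using cM m_def by (simp add: power_mono)
  finally show ?thesis unfolding P_def .
qed

lemma prefix_in:
  assumes cl: "\<forall>h a. h @ [a] \<in> T \<longrightarrow> h \<in> T"
  shows "xs @ ys \<in> T \<Longrightarrow> xs \<in> T"
proof (induction ys rule: rev_induct)
  case Nil then show ?case by simp
next
  case (snoc y ys) then show ?case using cl by (metis append_assoc)
qed

theorem proposition11:
  fixes T P1 :: "'a list set" and info :: "'a list \<Rightarrow> 'i" and A :: "'i \<Rightarrow> 'a set"
    and z :: "'a list"
  assumes "sp_game T P1 info A"
    and "is_leaf T z"
  shows "1 / alpha P1 info A z \<le>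
    (\<Prod>I\<in>{I \<in> info ` P1. n_info P1 info z I > 1}.
       real (min (n_info P1 info z I) (card (A I))) ^ n_info P1 info z I)"
proof -
  have finT: "finite T" and cl: "\<forall>h a. h @ [a] \<in> T \<longrightarrow> h \<in> T" and P1T: "P1 \<subseteq> T"
    and ch: "\<forall>h\<in>P1. children T h = A (info h)"
    using assms(1) unfolding sp_game_def by auto
  have zT: "z \<in> T" using assms(2) unfolding is_leaf_def by auto
  have takeT: "take j z \<in> T" for j
    using prefix_in[OF cl, of "take j z" "drop j z"] zT by simp
  have finch: "finite (children T h)" for h
  proof -
    have "children T h = (\<lambda>a. h @ [a]) -` T" unfolding children_def by auto
    then show ?thesis using finT by (auto intro!: finite_vimageI inj_onI)
  qed
  define J where "J = {I \<in> info ` P1. n_info P1 info z I > 1}"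
  have finJ: "finite J" unfolding J_def using finite_subset[OF P1T finT] by simp
  have inner: "1 / (\<Prod>a\<in>{a \<in> A I. n_act P1 info z I a > 0}.
          (real (n_act P1 info z I a) / real (n_info P1 info z I)) ^ n_act P1 info z I a)
        \<le> real (min (n_info P1 info z I) (card (A I))) ^ n_info P1 info z I" if IJ: "I \<in> J" for I
  proof -
    define K where "K = {k. k < length z \<and> take k z \<in> P1 \<and> info (take k z) = I}"
    define n where "n = n_info P1 info z I"
    have nK: "n = card K" unfolding n_def n_info_def K_def by simp
    have finK: "finite K" unfolding K_def by simp
    have "n > 1" using IJ unfolding J_def n_def by simp
    then have "K \<noteq> {}" using nK by auto
    then obtain k0 where k0: "k0 \<in> K" by auto
    have AI: "A I = children T (take k0 z)" using ch k0 unfolding K_def by auto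
    have finA: "finite (A I)" using AI finch by simp
    have img: "(\<lambda>k. z ! k) ` K \<subseteq> A I"
    proof
      fix x assume "x \<in> (\<lambda>k. z ! k) ` K"
      then obtain k where k: "k \<in> K" "x = z ! k" by auto
      have "take k z @ [z ! k] = take (Suc k) z" using k unfolding K_def by (simp add: take_Suc_conv_app_nth)
      then have "take k z @ [z ! k] \<in> T" using takeT[of "Suc k"] by simp
      then have "z ! k \<in> children T (take k z)" unfolding children_def by simp
      then show "x \<in> A I" using ch k unfolding K_def by auto
    qed
    have nact: "n_act P1 info z I a = card {k \<in> K. z ! k = a}" for a
      unfolding n_act_def K_def by (rule arg_cong[where f=card]) auto
    define S where "S = {a \<in> A I. n_act P1 info z I a > 0}"
    have finS: "finite S" using finA unfolding S_def by simp
    have sumA: "(\<Sum>a\<in>A I. n_act P1 info z I a) = n"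
      unfolding nK nact using sum.group[OF finK finA img, of "\<lambda>_. 1::nat"] by simp
    have sumS: "(\<Sum>a\<in>S. n_act P1 info z I a) = n"
      unfolding sumA[symmetric] S_def using finA by (intro sum.mono_neutral_left) auto
    have c1: "card S \<le> card (A I)" unfolding S_def using finA by (intro card_mono) auto
    have "card S = (\<Sum>a\<in>S. 1::nat)" by simp
    also have "\<dots> \<le> (\<Sum>a\<in>S. n_act P1 info z I a)" unfolding S_def
      by (intro sum_mono) auto
    finally have c2: "card S \<le> n" using sumS by simp
    show ?thesis
      using key_ineq[OF finS _ sumS, of "min n (card (A I))"] c1 c2 unfolding S_def n_def
      by auto
  qed
  have "1 / alpha P1 info A z = (\<Prod>I\<in>J. 1 / (\<Prod>a\<in>{a \<in> A I. n_act P1 info z I a > 0}.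
          (real (n_act P1 info z I a) / real (n_info P1 info z I)) ^ n_act P1 info z I a))"
    unfolding alpha_def J_def by (simp add: prod_dividef)
  also have "\<dots> \<le> (\<Prod>I\<in>J. real (min (n_info P1 info z I) (card (A I))) ^ n_info P1 info z I)"
    by (intro prod_mono conjI inner) (auto intro!: prod_nonneg divide_nonneg_nonneg)
  finally show ?thesis unfolding J_def .
qed

end
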